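(* Let $G$ be a connected graph of order $n$ with diameter $d\ge 2$, and suppose $G$ is not isomorphic to the path $P_{d+1}$. Then $m_G[n-d+2,n]\le n-d$.
   Context: For a graph $G$ of order $n$, the Laplacian eigenvalues are the eigenvalues of the Laplacian matrix $L(G)=D(G)-A(G)$ (they lie in $[0,n]$), and for an interval $I\subseteq[0,n]$, $m_G I$ denotes the number of Laplacian eigenvalues of $G$ (counted with multiplicity) in $I$. $P_k$ is the path on $k$ vertices. *)

theory Defs
  imports "Jordan_Normal_Form.Char_Poly"
begin

definition simple_graph :: "nat \<Rightarrow> (nat \<Rightarrow> nat \<Rightarrow> bool) \<Rightarrow> bool" where
  "simple_graph n E \<longleftrightarrow> (\<forall>u v. E u v \<longrightarrow> u < n \<and> v < n \<and> u \<noteq> v \<and> E v u)"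

definition graph_connected :: "nat \<Rightarrow> (nat \<Rightarrow> nat \<Rightarrow> bool) \<Rightarrow> bool" where
  "graph_connected n E \<longleftrightarrow> (\<forall>u<n. \<forall>v<n. \<exists>k. (E ^^ k) u v)"

definition graph_dist :: "(nat \<Rightarrow> nat \<Rightarrow> bool) \<Rightarrow> nat \<Rightarrow> nat \<Rightarrow> nat" where
  "graph_dist E u v = (LEAST k. (E ^^ k) u v)"

definition diameter :: "nat \<Rightarrow> (nat \<Rightarrow> nat \<Rightarrow> bool) \<Rightarrow> nat" where
  "diameter n E = Max {graph_dist E u v | u v. u < n \<and> v < n}"

definition degree :: "nat \<Rightarrow> (nat \<Rightarrow> nat \<Rightarrow> bool) \<Rightarrow> nat \<Rightarrow> nat" where
  "degree n E u = card {w. w < n \<and> E u w}"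

definition laplacian :: "nat \<Rightarrow> (nat \<Rightarrow> nat \<Rightarrow> bool) \<Rightarrow> real mat" where
  "laplacian n E = mat n n (\<lambda>(i, j). if i = j then real (degree n E i)
                                     else if E i j then -1 else 0)"

definition lap_eig_count :: "nat \<Rightarrow> (nat \<Rightarrow> nat \<Rightarrow> bool) \<Rightarrow> real set \<Rightarrow> nat" where
  "lap_eig_count n E I =
     (\<Sum>x\<in>{x. poly (char_poly (laplacian n E)) x = 0 \<and> x \<in> I}.
        order x (char_poly (laplacian n E)))"

definition iso_to_path :: "nat \<Rightarrow> (nat \<Rightarrow> nat \<Rightarrow> bool) \<Rightarrow> nat \<Rightarrow> bool" where
  "iso_to_path n E k \<longleftrightarrow> (\<exists>f. bij_betw f {0..<n} {0..<k} \<and>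
      (\<forall>u<n. \<forall>v<n. E u v \<longleftrightarrow> (f u + 1 = f v \<or> f v + 1 = f u)))"

end

theory Submission
  imports Defs "Jordan_Normal_Form.Schur_Decomposition"
begin

lemma sym_real_root:
  fixes A :: "real mat"
  assumes A: "A \<in> carrier_mat n n" and n: "0 < n"
    and sym: "\<And>i j. i < n \<Longrightarrow> j < n \<Longrightarrow> A $$ (i,j) = A $$ (j,i)"
  shows "\<exists>e. poly (char_poly A) e = 0"
proof -
  let ?Ac = "map_mat complex_of_real A"
  have Ac: "?Ac \<in> carrier_mat n n" using A by auto
  have cp: "char_poly ?Ac = map_poly complex_of_real (char_poly A)"
    using of_real_hom.char_poly_hom[OF A] .
  from char_poly_factorized[OF Ac] obtain as where
    fa: "char_poly ?Ac = (\<Prod>a\<leftarrow>as. [:- a, 1:])" and len: "length as = n" by auto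
  then obtain c where c: "c \<in> set as" using n by (cases as) auto
  have root: "poly (char_poly ?Ac) c = 0" using fa c linear_poly_root by metis
  hence "eigenvalue ?Ac c" using eigenvalue_root_char_poly[OF Ac] by simp
  from find_eigenvector[OF Ac this] have ev: "eigenvector ?Ac (find_eigenvector ?Ac c) c" .
  define v where "v = find_eigenvector ?Ac c"
  have v: "v \<in> carrier_vec n" "v \<noteq> 0\<^sub>v n" "?Ac *\<^sub>v v = c \<cdot>\<^sub>v v"
    using ev unfolding eigenvector_def v_def using A by auto
  have dv: "dim_vec v = n" using v by auto
  obtain i0 where i0: "i0 < n" "v $ i0 \<noteq> 0"
    using v(1,2) by (metis eq_vecI carrier_vecD index_zero_vec(1) index_zero_vec(2))
  define r where "r = (\<Sum>i<n. cmod (v$i)^2)"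
  have rpos: "r > 0" unfolding r_def
  proof (rule sum_pos2[of _ i0])
  qed (use i0 in auto)
  have rr: "(\<Sum>i<n. cnj (v$i) * v$i) = complex_of_real r"
  proof -
    have cz: "\<And>z. cnj z * z = complex_of_real (cmod z ^ 2)" using complex_norm_square by (metis mult.commute)
    show ?thesis unfolding r_def of_real_sum cz by simp
  qed
  define s where "s = (\<Sum>i<n. cnj (v$i) * (?Ac *\<^sub>v v)$i)"
  have s1: "s = c * complex_of_real r"
    unfolding s_def v(3) rr[symmetric] sum_distrib_left using dv
    by (intro sum.cong refl, auto)
  have s2: "s = (\<Sum>i<n. \<Sum>j<n. cnj (v$i) * of_real (A$$(i,j)) * v$j)"
    unfolding s_def
    by (intro sum.cong refl, insert A dv, auto simp: scalar_prod_def sum_distrib_left atLeast0LessThan mult.assoc)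
  have "cnj s = (\<Sum>i<n. \<Sum>j<n. v$i * of_real (A$$(i,j)) * cnj (v$j))"
    unfolding s2 cnj_sum by simp
  also have "\<dots> = (\<Sum>j<n. \<Sum>i<n. v$i * of_real (A$$(i,j)) * cnj (v$j))"
    by (rule sum.swap)
  also have "\<dots> = s" unfolding s2
  proof (intro sum.cong refl)
    fix j i assume "j \<in> {..<n}" "i \<in> {..<n}"
    then have "A $$ (i,j) = A $$ (j,i)" using sym[of i j] by auto
    then show "v$i * of_real (A$$(i,j)) * cnj (v$j) = cnj (v$j) * of_real (A$$(j,i)) * v$i"
      by simp
  qed
  finally have "cnj s = s" .
  hence "cnj c * complex_of_real r = c * complex_of_real r" unfolding s1 by simp
  hence cc: "cnj c = c" using rpos by simp
  hence "Im c = 0" by (simp add: complex_eq_iff)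
  hence "c = complex_of_real (Re c)" by (simp add: complex_eq_iff)
  have "complex_of_real (poly (char_poly A) (Re c)) = 0"
    unfolding of_real_hom.poly_map_poly[symmetric] cp[symmetric]
    using root \<open>c = complex_of_real (Re c)\<close> by simp
  thus ?thesis by auto
qed

lemma sum_delta_l: "(i::nat) < n \<Longrightarrow> (\<Sum>k = 0..<n. (if i = k then 1 else 0) * f k) = (f i :: real)"
proof -
  assume i: "i < n"
  have "(\<Sum>k = 0..<n. (if i = k then 1 else 0) * f k) = (\<Sum>k = 0..<n. if k = i then f k else 0)"
    by (rule sum.cong) auto
  also have "\<dots> = f i" using i by simp
  finally show ?thesis .
qed

lemma sum_delta_r: "(i::nat) < n \<Longrightarrow> (\<Sum>k = 0..<n. f k * (if k = i then 1 else 0)) = (f i :: real)"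
proof -
  assume i: "i < n"
  have "(\<Sum>k = 0..<n. f k * (if k = i then 1 else 0)) = (\<Sum>k = 0..<n. if k = i then f k else 0)"
    by (rule sum.cong) auto
  also have "\<dots> = f i" using i by simp
  finally show ?thesis .
qed

lemma householder:
  fixes u :: "real vec"
  assumes u: "u \<in> carrier_vec n" "u \<bullet> u = 1" and n: "0 < n"
  shows "\<exists>H. H \<in> carrier_mat n n \<and> H\<^sup>T = H \<and> H * H = 1\<^sub>m n \<and> col H 0 = u"
proof -
  define w where "w = vec n (\<lambda>i. u $ i - (if i = 0 then 1 else 0))"
  define S where "S = (\<Sum>k = 0..<n. w$k * w$k)"
  define c where "c = 2 / S"
  define H where "H = mat n n (\<lambda>(i,j). (if i = j then 1 else 0) - c * w$i * w$j)"
  have Hc: "H \<in> carrier_mat n n" unfolding H_def by auto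
  have HT: "H\<^sup>T = H" unfolding H_def by (rule eq_matI, auto)
  have cS: "c * c * S = 2 * c" unfolding c_def
    by (cases "S = 0", auto simp: field_simps power2_eq_square)
  have HH: "H * H = 1\<^sub>m n"
  proof (rule eq_matI)
    fix i j assume i: "i < dim_row (1\<^sub>m n)" and j: "j < dim_col (1\<^sub>m n)"
    hence i: "i < n" and j: "j < n" by auto
    have "(H * H) $$ (i,j) = (\<Sum>k = 0..<n. ((if i = k then 1 else 0) - c * w$i * w$k) * ((if k = j then 1 else 0) - c * w$k * w$j))"
      using i j unfolding H_def by (auto simp: scalar_prod_def)
    also have "\<dots> = (\<Sum>k = 0..<n. (if i = k then 1 else 0) * ((if k = j then 1 else 0) - c * w$k * w$j))
       - (\<Sum>k = 0..<n. ((if k = j then 1 else 0) - c * w$k * w$j) * (c * w$i * w$k))"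
      by (simp add: sum_subtractf[symmetric] algebra_simps)
    also have "(\<Sum>k = 0..<n. (if i = k then 1 else 0) * ((if k = j then 1 else 0) - c * w$k * w$j))
      = (if i = j then 1 else 0) - c * w$i * w$j"
      by (rule sum_delta_l[OF i])
    also have "(\<Sum>k = 0..<n. ((if k = j then 1 else 0) - c * w$k * w$j) * (c * w$i * w$k))
      = (\<Sum>k = 0..<n. (if k = j then 1 else 0) * (c * w$i * w$k)) - (\<Sum>k = 0..<n. (c * c * w$i * w$j) * (w$k * w$k))"
      by (simp add: sum_subtractf[symmetric] algebra_simps)
    also have "(\<Sum>k = 0..<n. (if k = j then 1 else 0) * (c * w$i * w$k)) = c * w$i * w$j"
      using sum_delta_r[OF j, of "\<lambda>k. c * w$i * w$k"] by (simp add: mult.commute)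
    also have "(\<Sum>k = 0..<n. (c * c * w$i * w$j) * (w$k * w$k)) = c * c * S * w$i * w$j"
      unfolding S_def sum_distrib_left[symmetric] by (simp add: algebra_simps)
    finally show "(H * H) $$ (i,j) = 1\<^sub>m n $$ (i,j)" using i j cS by auto
  qed (insert Hc, auto)
  have u0: "u $ 0 - 1 = w $ 0" unfolding w_def using n by auto
  have S2: "S = 2 - 2 * u $ 0"
  proof -
    have "S = (\<Sum>k = 0..<n. u$k * u$k - 2 * ((if k = 0 then 1 else 0) * u$k) + (if k = 0 then 1 else 0))"
      unfolding S_def w_def by (intro sum.cong refl, auto simp: algebra_simps)
    also have d0: "(\<Sum>k = 0..<n. (if k = 0 then 1 else 0) * u$k) = u$0"
      using sum_delta_r[OF n, of "\<lambda>k. u$k"] by (simp add: mult.commute)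
    have "(\<Sum>k = 0..<n. u$k * u$k - 2 * ((if k = 0 then 1 else 0) * u$k) + (if k = 0 then 1 else 0)) = (\<Sum>k = 0..<n. u$k * u$k) - 2 * u $ 0 + 1"
      using n d0 by (simp add: sum.distrib sum_subtractf sum_distrib_left[symmetric] sum_delta_l[OF n] 
         sum.delta cong: if_cong)
    moreover have "(\<Sum>k = 0..<n. u$k * u$k) = 1" using u unfolding scalar_prod_def by auto
    ultimately show ?thesis by simp
  qed
  have col: "col H 0 = u"
  proof (rule eq_vecI)
    show "dim_vec (col H 0) = dim_vec u" using u Hc by auto
    fix i assume "i < dim_vec u"
    hence i: "i < n" using u by auto
    have Hi: "col H 0 $ i = (if i = 0 then 1 else 0) - c * w$i * w$0"
      using i n unfolding H_def by auto
    show "col H 0 $ i = u $ i"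
    proof (cases "w $ 0 = 0")
      case True
      hence "S = 0" using S2 u0 by simp
      hence "\<forall>k\<in>{0..<n}. w$k * w$k = 0" unfolding S_def
        by (subst sum_nonneg_eq_0_iff[symmetric], auto)
      hence "w $ i = 0" using i by auto
      thus ?thesis unfolding Hi using i unfolding w_def by auto
    next
      case False
      have "S = - 2 * w $ 0" using S2 u0 by simp
      hence "c * w$0 = -1" unfolding c_def using False by (simp add: field_simps)
      hence "c * w$i * w$0 = - w $ i" by (metis mult.commute mult.left_commute mult_minus1_right)
      thus ?thesis unfolding Hi using i unfolding w_def by auto
    qed
  qed
  show ?thesis using Hc HT HH col by blast
qed

lemma assoc_n: "A \<in> carrier_mat n n \<Longrightarrow> B \<in> carrier_mat n n \<Longrightarrow> C \<in> carrier_mat n n \<Longrightarrow> A * B * C = A * (B * (C :: 'a :: semiring_0 mat))"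
  by (rule assoc_mult_mat)

lemma spectral:
  fixes A :: "real mat"
  assumes "A \<in> carrier_mat n n" "A\<^sup>T = A"
  shows "\<exists>Q D. Q \<in> carrier_mat n n \<and> D \<in> carrier_mat n n \<and> diagonal_mat D \<and>
     Q\<^sup>T * Q = 1\<^sub>m n \<and> Q * Q\<^sup>T = 1\<^sub>m n \<and> A = Q * D * Q\<^sup>T"
  using assms
proof (induction n arbitrary: A)
  case 0
  hence "A = 1\<^sub>m 0 * A * (1\<^sub>m 0)\<^sup>T" by auto
  moreover have "diagonal_mat A" unfolding diagonal_mat_def using 0 by auto
  ultimately show ?case using 0 by (intro exI[of _ "1\<^sub>m 0"] exI[of _ A], auto)
next
  case (Suc m)
  define n where "n = Suc m"
  have A: "A \<in> carrier_mat n n" using Suc n_def by auto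
  have sym: "\<And>i j. i < n \<Longrightarrow> j < n \<Longrightarrow> A $$ (i,j) = A $$ (j,i)"
  proof -
    fix i j assume "i < n" "j < n"
    hence "A\<^sup>T $$ (j,i) = A $$ (i,j)" using A by auto
    thus "A $$ (i,j) = A $$ (j,i)" using Suc by simp
  qed
  obtain e where "poly (char_poly A) e = 0" using sym_real_root[OF A _ sym] n_def by auto
  hence "eigenvalue A e" using eigenvalue_root_char_poly[OF A] by simp
  from find_eigenvector[OF A this] have "eigenvector A (find_eigenvector A e) e" .
  then obtain v where v: "v \<in> carrier_vec n" "v \<noteq> 0\<^sub>v n" "A *\<^sub>v v = e \<cdot>\<^sub>v v"
    unfolding eigenvector_def using A by auto
  obtain i0 where i0: "i0 < n" "v $ i0 \<noteq> 0"
    using v(1,2) by (metis eq_vecI carrier_vecD index_zero_vec(1) index_zero_vec(2))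
  have vv: "v \<bullet> v > 0" unfolding scalar_prod_def
    by (rule sum_pos2[of _ i0], insert i0 v, auto)
  define u where "u = (1 / sqrt (v \<bullet> v)) \<cdot>\<^sub>v v"
  have uc: "u \<in> carrier_vec n" using v unfolding u_def by auto
  have uu: "u \<bullet> u = 1" unfolding u_def using v vv
    by (simp add: smult_scalar_prod_distrib[of _ n] scalar_prod_smult_distrib[of _ n])
  have Au: "A *\<^sub>v u = e \<cdot>\<^sub>v u" unfolding u_def using v A
    by (simp add: mult_mat_vec[OF A] smult_smult_assoc mult.commute)
  obtain H where H: "H \<in> carrier_mat n n" "H\<^sup>T = H" "H * H = 1\<^sub>m n" "col H 0 = u"
    using householder[OF uc uu] n_def by auto
  have Hu: "H *\<^sub>v u = unit_vec n 0"
  proof -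
    have "H *\<^sub>v u = col (H * H) 0" using col_mult2[OF H(1) H(1), of 0] H(4) n_def by simp
    also have "\<dots> = unit_vec n 0" using H(3) n_def by simp
    finally show ?thesis .
  qed
  define A' where "A' = H * A * H"
  have A'c: "A' \<in> carrier_mat n n" unfolding A'_def using H A by auto
  have colA': "col A' 0 = e \<cdot>\<^sub>v unit_vec n 0"
  proof -
    have "col A' 0 = (H * A) *\<^sub>v col H 0" unfolding A'_def by (rule col_mult2[of "H * A" n n H n 0], insert H A n_def, auto)
    also have "\<dots> = H *\<^sub>v (A *\<^sub>v u)" unfolding H(4) using H A uc by (simp add: assoc_mult_mat_vec[of _ n n _ n])
    also have "\<dots> = e \<cdot>\<^sub>v unit_vec n 0" unfolding Au using H uc by (simp add: mult_mat_vec[of _ n n] Hu)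
    finally show ?thesis .
  qed
  have A'T: "A'\<^sup>T = A'" unfolding A'_def using H A Suc(3)
    by (simp add: transpose_mult[of _ n n _ n] assoc_n[of _ n])
  have A'i0: "\<And>i. i < n \<Longrightarrow> A' $$ (i, 0) = (if i = 0 then e else 0)"
  proof -
    fix i assume i: "i < n"
    have "col A' 0 $ i = A' $$ (i, 0)" using i A'c n_def by auto
    thus "A' $$ (i, 0) = (if i = 0 then e else 0)" unfolding colA' using i by auto
  qed
  have A'0j: "\<And>j. j < n \<Longrightarrow> A' $$ (0, j) = (if j = 0 then e else 0)"
  proof -
    fix j assume j: "j < n"
    have "A'\<^sup>T $$ (j, 0) = A' $$ (0, j)" using j A'c n_def by auto
    thus "A' $$ (0, j) = (if j = 0 then e else 0)" using A'i0[OF j] A'T by simp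
  qed
  define A3 where "A3 = mat m m (\<lambda>(i,j). A' $$ (Suc i, Suc j))"
  have A3c: "A3 \<in> carrier_mat m m" unfolding A3_def by auto
  have A3T: "A3\<^sup>T = A3"
  proof (rule eq_matI)
    fix i j assume "i < dim_row A3" "j < dim_col A3"
    hence ij: "i < m" "j < m" unfolding A3_def by auto
    have "A'\<^sup>T $$ (Suc j, Suc i) = A' $$ (Suc i, Suc j)" using ij A'c n_def by auto
    thus "A3\<^sup>T $$ (i, j) = A3 $$ (i, j)" unfolding A3_def using ij A'T by auto
  qed (auto simp: A3_def)
  define E where "E = mat 1 1 (\<lambda>_. e)"
  have Ec: "E \<in> carrier_mat 1 1" unfolding E_def by auto
  have A'blk: "A' = four_block_mat E (0\<^sub>m 1 m) (0\<^sub>m m 1) A3"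
  proof (rule eq_matI)
    fix i j assume "i < dim_row (four_block_mat E (0\<^sub>m 1 m) (0\<^sub>m m 1) A3)"
       "j < dim_col (four_block_mat E (0\<^sub>m 1 m) (0\<^sub>m m 1) A3)"
    hence ij: "i < n" "j < n" using Ec A3c n_def by auto
    show "A' $$ (i, j) = four_block_mat E (0\<^sub>m 1 m) (0\<^sub>m m 1) A3 $$ (i, j)"
    proof (cases "i = 0")
      case True
      thus ?thesis using ij Ec A3c A'0j[of j] n_def by (auto simp: E_def)
    next
      case False
      show ?thesis
      proof (cases "j = 0")
        case True
        thus ?thesis using ij Ec A3c A'i0[of i] False n_def by (auto simp: E_def)
      next
        case False
        then obtain i' j' where "i = Suc i'" "j = Suc j'" using \<open>i \<noteq> 0\<close> by (metis not0_implies_Suc)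
        thus ?thesis using ij Ec A3c n_def by (auto simp: A3_def)
      qed
    qed
  qed (insert A'c Ec A3c n_def, auto)
  from Suc(1)[OF A3c A3T] obtain Q3 D3 where IH: "Q3 \<in> carrier_mat m m" "D3 \<in> carrier_mat m m"
    "diagonal_mat D3" "Q3\<^sup>T * Q3 = 1\<^sub>m m" "Q3 * Q3\<^sup>T = 1\<^sub>m m" "A3 = Q3 * D3 * Q3\<^sup>T" by blast
  define B where "B = four_block_mat (1\<^sub>m 1) (0\<^sub>m 1 m) (0\<^sub>m m 1) Q3"
  define D where "D = four_block_mat E (0\<^sub>m 1 m) (0\<^sub>m m 1) D3"
  have Bc: "B \<in> carrier_mat n n" unfolding B_def n_def using IH by auto
  have Dc: "D \<in> carrier_mat n n" unfolding D_def n_def using IH Ec by auto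
  have BT: "B\<^sup>T = four_block_mat (1\<^sub>m 1) (0\<^sub>m 1 m) (0\<^sub>m m 1) Q3\<^sup>T"
    unfolding B_def by (subst transpose_four_block_mat, insert IH, auto)
  have BTc: "B\<^sup>T \<in> carrier_mat n n" using Bc by auto
  have BTB: "B\<^sup>T * B = 1\<^sub>m n" unfolding BT unfolding B_def n_def
    by (subst mult_four_block_mat, insert IH, auto)
  have BBT: "B * B\<^sup>T = 1\<^sub>m n" unfolding BT unfolding B_def n_def
    by (subst mult_four_block_mat, insert IH, auto)
  have BDB: "B * D * B\<^sup>T = A'" unfolding BT unfolding B_def D_def A'blk IH(6)
    by (subst mult_four_block_mat, insert IH Ec, auto, subst mult_four_block_mat, insert IH Ec, auto)
  have diagD: "diagonal_mat D" unfolding diagonal_mat_def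
  proof (intro allI impI)
    fix i j assume ij: "i < dim_row D" "j < dim_col D" "i \<noteq> j"
    thus "D $$ (i,j) = 0" using IH(3) Ec IH(2) unfolding D_def diagonal_mat_def E_def
      by (auto simp: D_def)
  qed
  define Q where "Q = H * B"
  have Qc: "Q \<in> carrier_mat n n" unfolding Q_def using H Bc by auto
  have QT: "Q\<^sup>T = B\<^sup>T * H" unfolding Q_def using H Bc by (simp add: transpose_mult[of _ n n _ n])
  have HHX: "\<And>X. X \<in> carrier_mat n n \<Longrightarrow> H * (H * X) = X"
  proof -
    fix X :: "real mat" assume X: "X \<in> carrier_mat n n"
    have "H * (H * X) = (H * H) * X" by (rule assoc_n[symmetric], insert H X, auto)
    thus "H * (H * X) = X" using H X by simp
  qed
  note HHB = HHX[OF Bc]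
  have "Q\<^sup>T * Q = B\<^sup>T * (H * (H * B))" unfolding QT unfolding Q_def using H Bc BTc by (simp add: assoc_n[of _ n])
  also have "\<dots> = B\<^sup>T * B" unfolding HHB ..
  finally have QTQ: "Q\<^sup>T * Q = 1\<^sub>m n" using BTB by simp
  have "Q * Q\<^sup>T = H * (B * B\<^sup>T) * H" unfolding QT unfolding Q_def using H Bc BTc by (simp add: assoc_n[of _ n])
  also have "\<dots> = H * H" unfolding BBT using H by simp
  finally have QQT: "Q * Q\<^sup>T = 1\<^sub>m n" using H by simp
  have "Q * D * Q\<^sup>T = H * (B * D * B\<^sup>T) * H" unfolding QT unfolding Q_def using H Bc BTc Dc by (simp add: assoc_n[of _ n])
  also have "\<dots> = A" unfolding BDB A'_def using H A by (simp add: assoc_n[of _ n] HHX)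
  finally have "A = Q * D * Q\<^sup>T" by simp
  thus ?case using Qc Dc diagD QTQ QQT n_def by blast
qed

lemma homog:
  fixes c :: "nat \<Rightarrow> nat \<Rightarrow> real"
  assumes "finite J" "finite T" "card J < card T"
  shows "\<exists>x. (\<forall>t. t \<notin> T \<longrightarrow> x t = 0) \<and> (\<exists>t\<in>T. x t \<noteq> 0) \<and> (\<forall>j\<in>J. (\<Sum>t\<in>T. c j t * x t) = 0)"
  using assms
proof (induction J arbitrary: T c rule: finite_induct)
  case empty
  then obtain t0 where "t0 \<in> T" by fastforce
  thus ?case by (intro exI[of _ "\<lambda>t. if t = t0 then 1 else 0"], auto)
next
  case (insert j0 J)
  show ?case
  proof (cases "\<forall>t\<in>T. c j0 t = 0")
    case True
    have "card J < card T" using insert by auto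
    from insert(3)[OF insert(4) this, of c] obtain x where
      x: "\<forall>t. t \<notin> T \<longrightarrow> x t = 0" "\<exists>t\<in>T. x t \<noteq> 0" "\<forall>j\<in>J. (\<Sum>t\<in>T. c j t * x t) = 0" by blast
    show ?thesis using True x by (intro exI[of _ x], auto)
  next
    case False
    then obtain t0 where t0: "t0 \<in> T" "c j0 t0 \<noteq> 0" by auto
    define T' where "T' = T - {t0}"
    have fT': "finite T'" using insert unfolding T'_def by auto
    have cT': "card J < card T'" using insert t0 unfolding T'_def by (auto simp: card_Diff_singleton)
    define c' where "c' = (\<lambda>j t. c j t - c j t0 * c j0 t / c j0 t0)"
    from insert(3)[OF fT' cT', of c'] obtain x' where
      x': "\<forall>t. t \<notin> T' \<longrightarrow> x' t = 0" "\<exists>t\<in>T'. x' t \<noteq> 0" "\<forall>j\<in>J. (\<Sum>t\<in>T'. c' j t * x' t) = 0" by blast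
    define s where "s = (\<Sum>t\<in>T'. c j0 t * x' t)"
    define x where "x = x'(t0 := - s / c j0 t0)"
    have Tsplit: "\<And>f. (\<Sum>t\<in>T. f t) = f t0 + (\<Sum>t\<in>T'. f t)"
      unfolding T'_def using t0 insert by (simp add: sum.remove)
    have xT': "\<And>f. (\<Sum>t\<in>T'. f t * x t) = (\<Sum>t\<in>T'. f t * x' t)"
      by (rule sum.cong, auto simp: x_def T'_def)
    have supp: "\<forall>t. t \<notin> T \<longrightarrow> x t = 0" using x'(1) t0 unfolding x_def T'_def by auto
    have nz: "\<exists>t\<in>T. x t \<noteq> 0" using x'(2) unfolding x_def T'_def by auto
    have eq0: "(\<Sum>t\<in>T. c j0 t * x t) = 0"
      unfolding Tsplit xT' s_def[symmetric] using t0 by (simp add: x_def)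
    have eqJ: "(\<Sum>t\<in>T. c j t * x t) = 0" if j: "j \<in> J" for j
    proof -
      have "0 = (\<Sum>t\<in>T'. c' j t * x' t)" using x'(3) j by auto
      also have "\<dots> = (\<Sum>t\<in>T'. c j t * x' t) - c j t0 / c j0 t0 * s"
        unfolding c'_def s_def sum_distrib_left sum_subtractf[symmetric]
        by (rule sum.cong, auto simp: algebra_simps)
      finally have "(\<Sum>t\<in>T'. c j t * x' t) = c j t0 / c j0 t0 * s" by simp
      thus ?thesis unfolding Tsplit xT' by (simp add: x_def)
    qed
    show ?thesis using supp nz eq0 eqJ by (intro exI[of _ x], auto)
  qed
qed

lemma linprod_facts:
  fixes \<mu> :: "nat \<Rightarrow> real"
  shows "prod_list (map (\<lambda>l. [:-\<mu> l, 1:]) [0..<n]) \<noteq> 0 \<and>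
    (\<forall>z. poly (prod_list (map (\<lambda>l. [:-\<mu> l, 1:]) [0..<n])) z = 0 \<longleftrightarrow> (\<exists>l<n. \<mu> l = z)) \<and>
    (\<forall>z. Polynomial.order z (prod_list (map (\<lambda>l. [:-\<mu> l, 1:]) [0..<n])) = card {l. l < n \<and> \<mu> l = z})"
proof (induction n)
  case 0
  then show ?case by simp
next
  case (Suc n)
  let ?p = "prod_list (map (\<lambda>l. [:-\<mu> l, 1:]) [0..<n])"
  have eq: "prod_list (map (\<lambda>l. [:-\<mu> l, 1:]) [0..<Suc n]) = ?p * [:-\<mu> n, 1:]" by simp
  have p0: "?p \<noteq> 0" using Suc by blast
  have nz: "?p * [:-\<mu> n, 1:] \<noteq> 0" using p0 by (metis mult_eq_0_iff pCons_eq_0_iff one_neq_zero)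
  have roots: "\<forall>z. poly (?p * [:-\<mu> n, 1:]) z = 0 \<longleftrightarrow> (\<exists>l<Suc n. \<mu> l = z)"
    using Suc by (auto simp: less_Suc_eq)
  have ord: "Polynomial.order z (?p * [:-\<mu> n, 1:]) = card {l. l < Suc n \<and> \<mu> l = z}" for z
  proof -
    have "Polynomial.order z (?p * [:-\<mu> n, 1:]) = Polynomial.order z ?p + Polynomial.order z [:-\<mu> n, 1:]"
      by (rule order_mult[OF nz])
    also have "Polynomial.order z [:-\<mu> n, 1:] = (if \<mu> n = z then 1 else 0)"
      by (simp add: order_linear')
    also have "Polynomial.order z ?p = card {l. l < n \<and> \<mu> l = z}" using Suc by auto
    also have "{l. l < Suc n \<and> \<mu> l = z} = {l. l < n \<and> \<mu> l = z} \<union> (if \<mu> n = z then {n} else {})"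
      by (auto simp: less_Suc_eq)
    hence "card {l. l < Suc n \<and> \<mu> l = z} = card {l. l < n \<and> \<mu> l = z} + (if \<mu> n = z then 1 else 0)"
      by (simp add: card_Un_disjoint)
    finally show ?thesis by simp
  qed
  show ?case unfolding eq using nz roots ord by blast
qed

lemma count_linprod:
  fixes \<mu> :: "nat \<Rightarrow> real" and n :: nat
  defines "p \<equiv> prod_list (map (\<lambda>l. [:-\<mu> l, 1:]) [0..<n])"
  shows "(\<Sum>z\<in>{z. poly p z = 0 \<and> z \<in> I}. Polynomial.order z p) = card {l. l < n \<and> \<mu> l \<in> I}"
proof -
  note F = linprod_facts[of \<mu> n, folded p_def]
  define Z where "Z = {z. poly p z = 0 \<and> z \<in> I}"
  have Z: "Z = \<mu> ` {l. l < n \<and> \<mu> l \<in> I}" unfolding Z_def using F by auto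
  have fZ: "finite Z" unfolding Z by auto
  have "(\<Sum>z\<in>Z. Polynomial.order z p) = (\<Sum>z\<in>Z. card {l. l < n \<and> \<mu> l = z})"
    using F by simp
  also have "\<dots> = card (\<Union>z\<in>Z. {l. l < n \<and> \<mu> l = z})"
    by (rule card_UN_disjoint[symmetric], insert fZ, auto)
  also have "(\<Union>z\<in>Z. {l. l < n \<and> \<mu> l = z}) = {l. l < n \<and> \<mu> l \<in> I}" unfolding Z by auto
  finally show ?thesis unfolding Z_def .
qed

lemma triple_swap: "(\<Sum>i\<in>S. \<Sum>k\<in>S. \<Sum>l\<in>S. f i k l) = (\<Sum>l\<in>S. \<Sum>i\<in>S. \<Sum>k\<in>S. (f i k l :: real))"
proof -
  have "(\<Sum>i\<in>S. \<Sum>k\<in>S. \<Sum>l\<in>S. f i k l) = (\<Sum>i\<in>S. \<Sum>l\<in>S. \<Sum>k\<in>S. f i k l)"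
    by (rule sum.cong[OF refl], rule sum.swap)
  also have "\<dots> = (\<Sum>l\<in>S. \<Sum>i\<in>S. \<Sum>k\<in>S. f i k l)" by (rule sum.swap)
  finally show ?thesis .
qed

lemma count_principle:
  fixes A :: "real mat" and a :: real
  assumes A: "A \<in> carrier_mat n n" and AT: "A\<^sup>T = A"
   and T: "T \<subseteq> {0..<n}"
   and quad: "\<And>x. (\<forall>i. i \<notin> T \<longrightarrow> x i = 0) \<Longrightarrow> (\<exists>i\<in>T. x i \<noteq> 0) \<Longrightarrow>
       (\<Sum>i=0..<n. \<Sum>j=0..<n. x i * A$$(i,j) * x j) < a * (\<Sum>i=0..<n. x i * x i)"
   and I: "\<And>z. z \<in> I \<Longrightarrow> a \<le> z"
  shows "(\<Sum>z\<in>{z. poly (char_poly A) z = 0 \<and> z \<in> I}. Polynomial.order z (char_poly A)) \<le> n - card T"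
proof -
  obtain Q D where QD: "Q \<in> carrier_mat n n" "D \<in> carrier_mat n n" "diagonal_mat D"
     "Q\<^sup>T * Q = 1\<^sub>m n" "Q * Q\<^sup>T = 1\<^sub>m n" "A = Q * D * Q\<^sup>T"
    using spectral[OF A AT] by blast
  define \<mu> where "\<mu> = (\<lambda>l. D $$ (l,l))"
  have Dd: "\<And>i j. i < n \<Longrightarrow> j < n \<Longrightarrow> D $$ (i,j) = (if i = j then \<mu> j else 0)"
    using QD(2,3) unfolding diagonal_mat_def \<mu>_def by auto
  have sim: "similar_mat A D" unfolding similar_mat_def
    by (rule exI[of _ Q], rule exI[of _ "Q\<^sup>T"], rule similar_mat_witI[of _ _ n], insert QD A, auto)
  have ut: "upper_triangular D" using QD(2,3) unfolding upper_triangular_def diagonal_mat_def by auto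
  have cp: "char_poly A = prod_list (map (\<lambda>l. [:-\<mu> l, 1:]) [0..<n])"
    unfolding char_poly_similar[OF sim] char_poly_upper_triangular[OF QD(2) ut]
    using QD(2) by (simp add: diag_mat_def \<mu>_def o_def)
  have cnt: "(\<Sum>z\<in>{z. poly (char_poly A) z = 0 \<and> z \<in> I}. Polynomial.order z (char_poly A))
     = card {l. l < n \<and> \<mu> l \<in> I}" unfolding cp by (rule count_linprod)
  define J where "J = {l. l < n \<and> \<mu> l < a}"
  define K where "K = {l. l < n \<and> a \<le> \<mu> l}"
  have JK: "card J + card K = n"
  proof -
    have "J \<union> K = {0..<n}" "J \<inter> K = {}" unfolding J_def K_def by auto
    hence "card J + card K = card {0..<n}" by (metis card_Un_disjoint finite_Un finite_atLeastLessThan)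
    thus ?thesis by simp
  qed
  have IK: "card {l. l < n \<and> \<mu> l \<in> I} \<le> card K"
    by (rule card_mono, auto simp: K_def I)
  have Aent: "\<And>i k. i < n \<Longrightarrow> k < n \<Longrightarrow> A $$ (i,k) = (\<Sum>l=0..<n. Q$$(i,l) * \<mu> l * Q$$(k,l))"
  proof -
    fix i k assume i: "i < n" and k: "k < n"
    have "A $$ (i,k) = (\<Sum>m=0..<n. Q$$(i,m) * (\<Sum>l=0..<n. D$$(m,l) * Q$$(k,l)))"
      unfolding QD(6) using i k QD by (simp add: scalar_prod_def)
    also have "\<dots> = (\<Sum>m=0..<n. Q$$(i,m) * \<mu> m * Q$$(k,m))"
    proof (rule sum.cong[OF refl])
      fix m assume m: "m \<in> {0..<n}"
      have "(\<Sum>l=0..<n. D$$(m,l) * Q$$(k,l)) = (\<Sum>l=0..<n. (if m = l then 1 else 0) * (\<mu> l * Q$$(k,l)))"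
        by (rule sum.cong, insert m, auto simp: Dd)
      also have "\<dots> = \<mu> m * Q$$(k,m)" using m by (subst sum_delta_l, auto)
      finally show "Q$$(i,m) * (\<Sum>l=0..<n. D$$(m,l) * Q$$(k,l)) = Q$$(i,m) * \<mu> m * Q$$(k,m)" by simp
    qed
    finally show "A $$ (i,k) = (\<Sum>l=0..<n. Q$$(i,l) * \<mu> l * Q$$(k,l))" .
  qed
  have Qort: "\<And>i k. i < n \<Longrightarrow> k < n \<Longrightarrow> (\<Sum>l=0..<n. Q$$(i,l) * Q$$(k,l)) = (if i = k then 1 else 0)"
  proof -
    fix i k assume i: "i < n" and k: "k < n"
    have e1: "(Q * Q\<^sup>T) $$ (i,k) = (\<Sum>l=0..<n. Q$$(i,l) * Q$$(k,l))"
      using i k QD(1) by (auto simp: scalar_prod_def)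
    have e2: "(Q * Q\<^sup>T) $$ (i,k) = (if i = k then 1 else 0)" unfolding QD(5) using i k by simp
    show "(\<Sum>l=0..<n. Q$$(i,l) * Q$$(k,l)) = (if i = k then 1 else 0)" by (rule trans[OF e1[symmetric] e2])
  qed
  have "card T \<le> card J"
  proof (rule ccontr)
    assume "\<not> card T \<le> card J"
    hence lt: "card J < card T" by simp
    have fT: "finite T" using T finite_subset by blast
    have fJ: "finite J" unfolding J_def by auto
    from homog[OF fJ fT lt, of "\<lambda>j t. Q $$ (t,j)"] obtain x where
      x: "\<forall>t. t \<notin> T \<longrightarrow> x t = 0" "\<exists>t\<in>T. x t \<noteq> 0" "\<forall>j\<in>J. (\<Sum>t\<in>T. Q $$ (t,j) * x t) = 0" by blast
    define y where "y = (\<lambda>l. \<Sum>i=0..<n. Q$$(i,l) * x i)"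
    have yJ: "\<And>l. l \<in> J \<Longrightarrow> y l = 0"
    proof -
      fix l assume l: "l \<in> J"
      have "y l = (\<Sum>i\<in>T. Q$$(i,l) * x i)" unfolding y_def
        by (rule sum.mono_neutral_right, insert T x(1), auto)
      thus "y l = 0" using x(3) l by auto
    qed
    have yy: "\<And>l. y l * y l = (\<Sum>i=0..<n. \<Sum>k=0..<n. (Q$$(i,l) * x i) * (Q$$(k,l) * x k))"
      unfolding y_def by (rule sum_product)
    have q1: "(\<Sum>i=0..<n. \<Sum>k=0..<n. x i * A$$(i,k) * x k) = (\<Sum>l=0..<n. \<mu> l * (y l * y l))"
    proof -
      have "(\<Sum>i=0..<n. \<Sum>k=0..<n. x i * A$$(i,k) * x k)
          = (\<Sum>i=0..<n. \<Sum>k=0..<n. \<Sum>l=0..<n. \<mu> l * ((Q$$(i,l) * x i) * (Q$$(k,l) * x k)))"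
        by (rule sum.cong[OF refl], rule sum.cong[OF refl], simp add: Aent sum_distrib_left sum_distrib_right,
            rule sum.cong, auto simp: algebra_simps)
      also have "\<dots> = (\<Sum>l=0..<n. \<Sum>i=0..<n. \<Sum>k=0..<n. \<mu> l * ((Q$$(i,l) * x i) * (Q$$(k,l) * x k)))"
        by (rule triple_swap)
      also have "\<dots> = (\<Sum>l=0..<n. \<mu> l * (y l * y l))"
        unfolding yy by (simp add: sum_distrib_left)
      finally show ?thesis .
    qed
    have q2: "(\<Sum>i=0..<n. x i * x i) = (\<Sum>l=0..<n. y l * y l)"
    proof -
      have "(\<Sum>i=0..<n. x i * x i) = (\<Sum>i=0..<n. \<Sum>k=0..<n. (if i = k then 1 else 0) * (x i * x k))"
        by (rule sum.cong[OF refl], subst sum_delta_l, auto)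
      also have "\<dots> = (\<Sum>i=0..<n. \<Sum>k=0..<n. \<Sum>l=0..<n. (Q$$(i,l) * x i) * (Q$$(k,l) * x k))"
      proof (rule sum.cong[OF refl], rule sum.cong[OF refl])
        fix i k assume "i \<in> {0..<n}" "k \<in> {0..<n}"
        hence i: "i < n" and k: "k < n" by auto
        show "(if i = k then 1 else 0) * (x i * x k) = (\<Sum>l=0..<n. (Q$$(i,l) * x i) * (Q$$(k,l) * x k))"
          unfolding Qort[OF i k, symmetric] sum_distrib_right by (rule sum.cong, auto simp: algebra_simps)
      qed
      also have "\<dots> = (\<Sum>l=0..<n. \<Sum>i=0..<n. \<Sum>k=0..<n. (Q$$(i,l) * x i) * (Q$$(k,l) * x k))"
        by (rule triple_swap)
      also have "\<dots> = (\<Sum>l=0..<n. y l * y l)"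
        unfolding yy by simp
      finally show ?thesis .
    qed
    have ge: "a * (\<Sum>l=0..<n. y l * y l) \<le> (\<Sum>l=0..<n. \<mu> l * (y l * y l))"
      unfolding sum_distrib_left
    proof (rule sum_mono)
      fix l assume l: "l \<in> {0..<n}"
      show "a * (y l * y l) \<le> \<mu> l * (y l * y l)"
      proof (cases "l \<in> J")
        case True thus ?thesis using yJ by simp
      next
        case False
        hence "a \<le> \<mu> l" using l unfolding J_def by auto
        thus ?thesis by (rule mult_right_mono, simp)
      qed
    qed
    have "(\<Sum>i=0..<n. \<Sum>k=0..<n. x i * A$$(i,k) * x k) < a * (\<Sum>i=0..<n. x i * x i)"
      by (rule quad, insert x, auto)
    thus False using q1 q2 ge by simp
  qed
  thus ?thesis using cnt JK IK by linarith
qed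

lemma relpowp_prefix:
  assumes "\<forall>i<d. E (f i) (f (Suc i))" "i \<le> d"
  shows "(E ^^ i) (f 0) (f i)"
  using assms by (subst relpowp_fun_conv, intro exI[of _ f], auto)

lemma relpowp_suffix:
  assumes "\<forall>i<d. E (f i) (f (Suc i))" "j \<le> d"
  shows "(E ^^ (d - j)) (f j) (f d)"
  using assms by (subst relpowp_fun_conv, intro exI[of _ "\<lambda>t. f (j + t)"], auto)

lemma graph_setup:
  fixes n d :: nat and E :: "nat \<Rightarrow> nat \<Rightarrow> bool"
  assumes sg: "simple_graph n E" and n: "0 < n"
    and con: "graph_connected n E"
    and diam: "diameter n E = d" and d2: "d \<ge> 2"
    and np: "\<not> iso_to_path n E (d + 1)"
  shows "\<exists>v k w0. (\<forall>l\<le>d. v l < n) \<and> inj_on v {0..d} \<and>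
     (\<forall>l m. l \<le> d \<longrightarrow> m \<le> d \<longrightarrow> (E (v l) (v m) \<longleftrightarrow> (m = l + 1 \<or> l = m + 1))) \<and>
     k + 2 \<le> d \<and> w0 < n \<and> w0 \<notin> v ` {0..d} \<and>
     (\<forall>l\<le>d. E w0 (v l) \<longrightarrow> l = k \<or> l = k + 1 \<or> l = k + 2)"
proof -
  have Esym: "\<And>a b. E a b \<Longrightarrow> E b a" and Eirr: "\<And>a. \<not> E a a"
    and Ebd: "\<And>a b. E a b \<Longrightarrow> a < n \<and> b < n"
    using sg unfolding simple_graph_def by blast+
  define DS where "DS = {graph_dist E u v | u v. u < n \<and> v < n}"
  have "DS = (\<lambda>(u,v). graph_dist E u v) ` ({0..<n} \<times> {0..<n})" unfolding DS_def by fastforce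
  hence fDS: "finite DS" by auto
  have neDS: "DS \<noteq> {}" unfolding DS_def using n by auto
  have "d \<in> DS" using Max_in[OF fDS neDS] diam unfolding diameter_def DS_def by simp
  then obtain u0 ud where u: "u0 < n" "ud < n" "graph_dist E u0 ud = d" unfolding DS_def by auto
  from con u obtain k0 where "(E ^^ k0) u0 ud" unfolding graph_connected_def by blast
  hence walk: "(E ^^ d) u0 ud" using u(3) unfolding graph_dist_def by (metis LeastI)
  have minw: "\<And>k. (E ^^ k) u0 ud \<Longrightarrow> d \<le> k" using u(3) unfolding graph_dist_def by (metis Least_le)
  from walk obtain v where v: "v 0 = u0" "v d = ud" "\<forall>i<d. E (v i) (v (Suc i))"
    unfolding relpowp_fun_conv by blast
  have key: "\<And>i j L. i \<le> j \<Longrightarrow> j \<le> d \<Longrightarrow> (E ^^ L) (v i) (v j) \<Longrightarrow> j - i \<le> L"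
  proof -
    fix i j L assume ij: "i \<le> j" "j \<le> d" and w: "(E ^^ L) (v i) (v j)"
    have p: "(E ^^ i) u0 (v i)" using relpowp_prefix[of d E v i] v(3) ij v(1) by auto
    have s: "(E ^^ (d - j)) (v j) ud" using relpowp_suffix[of d E v j] v(3) ij(2) v(2) by auto
    have "(E ^^ (i + L + (d - j))) u0 ud" unfolding relpowp_add using p w s by (intro relcomppI)
    from minw[OF this] show "j - i \<le> L" using ij by simp
  qed
  have vn: "\<forall>l\<le>d. v l < n"
  proof (intro allI impI)
    fix l assume l: "l \<le> d"
    show "v l < n"
    proof (cases "l < d")
      case True thus ?thesis using v(3) Ebd by blast
    next
      case False thus ?thesis using l v(2) u(2) by auto
    qed
  qed
  have inj: "inj_on v {0..d}"
  proof (rule inj_onI)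
    fix i j assume ij: "i \<in> {0..d}" "j \<in> {0..d}" and eq: "v i = v j"
    have a: "(E ^^ 0) (v i) (v j)" and b: "(E ^^ 0) (v j) (v i)" using eq by simp_all
    have id: "i \<le> d" "j \<le> d" using ij by auto
    show "i = j"
    proof (cases "i \<le> j")
      case True
      from key[OF True id(2) a] True show ?thesis by simp
    next
      case False
      hence "j \<le> i" by simp
      from key[OF this id(1) b] this show ?thesis by simp
    qed
  qed
  have edges: "\<forall>l m. l \<le> d \<longrightarrow> m \<le> d \<longrightarrow> (E (v l) (v m) \<longleftrightarrow> (m = l + 1 \<or> l = m + 1))"
  proof (intro allI impI iffI)
    fix l m assume lm: "l \<le> d" "m \<le> d" and e: "E (v l) (v m)"
    have ne: "l \<noteq> m" using e Eirr by auto
    have e1: "(E ^^ 1) (v l) (v m)" "(E ^^ 1) (v m) (v l)" using e Esym[OF e] by auto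
    show "m = l + 1 \<or> l = m + 1"
    proof (cases "l \<le> m")
      case True
      from key[OF True lm(2) e1(1)] True ne show ?thesis by simp
    next
      case False
      hence "m \<le> l" by simp
      from key[OF this lm(1) e1(2)] this ne show ?thesis by simp
    qed
  next
    fix l m assume lm: "l \<le> d" "m \<le> d" and disj: "m = l + 1 \<or> l = m + 1"
    from disj show "E (v l) (v m)"
    proof
      assume "m = l + 1" thus ?thesis using v(3) lm by auto
    next
      assume "l = m + 1" hence "E (v m) (v l)" using v(3) lm by auto
      thus ?thesis by (rule Esym)
    qed
  qed
  have "\<exists>w0. w0 < n \<and> w0 \<notin> v ` {0..d}"
  proof (rule ccontr)
    assume "\<not> ?thesis"
    hence all: "{0..<n} \<subseteq> v ` {0..d}" by auto
    have "v ` {0..d} \<subseteq> {0..<n}" using vn by auto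
    with all have img: "v ` {0..d} = {0..<n}" by auto
    have bij: "bij_betw v {0..d} {0..<n}" using inj img unfolding bij_betw_def by auto
    define f where "f = inv_into {0..d} v"
    have bf: "bij_betw f {0..<n} {0..<d+1}" unfolding f_def using bij_betw_inv_into[OF bij]
      by (simp add: atLeastLessThanSuc_atLeastAtMost)
    have fv: "\<And>u. u < n \<Longrightarrow> f u \<le> d \<and> v (f u) = u"
    proof -
      fix u assume "u < n"
      hence u: "u \<in> v ` {0..d}" using img by auto
      show "f u \<le> d \<and> v (f u) = u" using inv_into_into[OF u] f_inv_into_f[OF u] unfolding f_def by auto
    qed
    have "iso_to_path n E (d + 1)" unfolding iso_to_path_def
    proof (intro exI[of _ f] conjI allI impI bf)
      fix a b assume a: "a < n" and b: "b < n"
      have "E a b = E (v (f a)) (v (f b))" using fv a b by simp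
      also have "\<dots> = (f b = f a + 1 \<or> f a = f b + 1)" using edges fv a b by blast
      finally show "E a b = (f a + 1 = f b \<or> f b + 1 = f a)" by auto
    qed
    with np show False by simp
  qed
  then obtain w0 where w0: "w0 < n" "w0 \<notin> v ` {0..d}" by blast
  define N0 where "N0 = {l. l \<le> d \<and> E w0 (v l)}"
  have win: "\<And>i j. i \<in> N0 \<Longrightarrow> j \<in> N0 \<Longrightarrow> i \<le> j \<Longrightarrow> j \<le> i + 2"
  proof -
    fix i j assume "i \<in> N0" "j \<in> N0" "i \<le> j"
    hence ij: "i \<le> j" "j \<le> d" "E (v i) w0" "E w0 (v j)" unfolding N0_def by (auto intro: Esym)
    have "(E ^^ 2) (v i) (v j)" using ij(3,4) by (auto simp: numeral_2_eq_2 relpowp_Suc_I2)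
    from key[OF ij(1,2) this] show "j \<le> i + 2" by simp
  qed
  have "\<exists>k. k + 2 \<le> d \<and> (\<forall>l\<le>d. E w0 (v l) \<longrightarrow> l = k \<or> l = k + 1 \<or> l = k + 2)"
  proof (cases "N0 = {}")
    case True
    thus ?thesis using d2 unfolding N0_def by (intro exI[of _ 0], auto)
  next
    case False
    have fN: "finite N0" unfolding N0_def by auto
    define i0 where "i0 = Min N0"
    have i0: "i0 \<in> N0" "\<And>j. j \<in> N0 \<Longrightarrow> i0 \<le> j" using Min_in[OF fN False] Min_le[OF fN] unfolding i0_def by auto
    define k where "k = min i0 (d - 2)"
    show ?thesis
    proof (intro exI[of _ k] conjI allI impI)
      show "k + 2 \<le> d" unfolding k_def using d2 by auto
      fix l assume l: "l \<le> d" "E w0 (v l)"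
      hence lN: "l \<in> N0" unfolding N0_def by auto
      have "i0 \<le> l" "l \<le> i0 + 2" using i0(2)[OF lN] win[OF i0(1) lN] by auto
      thus "l = k \<or> l = k + 1 \<or> l = k + 2" using l(1) d2 unfolding k_def by linarith
    qed
  qed
  then obtain k where k: "k + 2 \<le> d" "\<forall>l\<le>d. E w0 (v l) \<longrightarrow> l = k \<or> l = k + 1 \<or> l = k + 2" by blast
  show ?thesis by (rule exI[of _ v], rule exI[of _ k], rule exI[of _ w0], insert vn inj edges k w0, simp)
qed

lemma path_identity:
  fixes z :: "nat \<Rightarrow> real"
  shows "(\<Sum>l=0..d. \<Sum>m=0..d. if m = l + 1 \<or> l = m + 1 then z l * z l - z l * z m else 0)
     = (\<Sum>l=0..<d. (z l - z (l+1))^2)"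
proof (induction d)
  case 0
  then show ?case by simp
next
  case (Suc d)
  define f where "f = (\<lambda>l m. if m = l + 1 \<or> l = m + 1 then z l * z l - z l * z m else (0::real))"
  have e1: "(\<Sum>l=0..d. f l (Suc d)) = z d * z d - z d * z (Suc d)"
  proof -
    have "(\<Sum>l=0..d. f l (Suc d)) = (\<Sum>l=0..d. if l = d then z d * z d - z d * z (Suc d) else 0)"
      by (rule sum.cong, auto simp: f_def)
    thus ?thesis by simp
  qed
  have e2: "(\<Sum>m=0..d. f (Suc d) m) = z (Suc d) * z (Suc d) - z (Suc d) * z d"
  proof -
    have "(\<Sum>m=0..d. f (Suc d) m) = (\<Sum>m=0..d. if m = d then z (Suc d) * z (Suc d) - z (Suc d) * z d else 0)"
      by (rule sum.cong, auto simp: f_def)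
    thus ?thesis by simp
  qed
  have e3: "f (Suc d) (Suc d) = 0" unfolding f_def by simp
  have "(\<Sum>l=0..Suc d. \<Sum>m=0..Suc d. f l m) = (\<Sum>l=0..d. \<Sum>m=0..d. f l m) + (\<Sum>l=0..d. f l (Suc d))
     + (\<Sum>m=0..d. f (Suc d) m) + f (Suc d) (Suc d)"
    by (simp add: sum.distrib)
  also have "\<dots> = (\<Sum>l=0..<d. (z l - z (l+1))^2) + (z d - z (Suc d))^2"
    unfolding e1 e2 e3 unfolding f_def using Suc by (simp add: power2_eq_square algebra_simps)
  finally show ?case unfolding f_def by simp
qed

lemma sq_identity:
  fixes z :: "nat \<Rightarrow> real"
  shows "(\<Sum>l=0..<d. (z l - z (l+1))^2) + (\<Sum>l=0..<d. (z l + z (l+1))^2)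
     = 4 * (\<Sum>l=0..d. (z l)^2) - 2 * (z 0)^2 - 2 * (z d)^2"
proof (induction d)
  case 0 thus ?case by simp
next
  case (Suc d)
  thus ?case by (simp add: power2_eq_square algebra_simps)
qed

lemma path_bound:
  fixes z :: "nat \<Rightarrow> real"
  assumes k: "k + 2 \<le> d" and z1: "z (k+1) = 0" and nz: "\<exists>l\<le>d. z l \<noteq> 0"
  shows "(\<Sum>l=0..<d. (z l - z (l+1))^2) + (z k)^2 + (z (k+2))^2 < 4 * (\<Sum>l=0..d. (z l)^2)"
proof -
  define W where "W = {0..<d} - {k, k+1}"
  define R where "R = (\<Sum>l\<in>W. (z l + z (l+1))^2)"
  have Rnn: "R \<ge> 0" unfolding R_def by (rule sum_nonneg, auto)
  have split: "(\<Sum>l=0..<d. (z l + z (l+1))^2) = R + (z k + z (k+1))^2 + (z (k+1) + z (k+2))^2"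
  proof -
    have eqs: "{0..<d} = W \<union> {k, k+1}" unfolding W_def using k by auto
    have "(\<Sum>l=0..<d. (z l + z (l+1))^2) = (\<Sum>l\<in>W \<union> {k, k+1}. (z l + z (l+1))^2)"
      unfolding eqs[symmetric] ..
    also have "\<dots> = R + (\<Sum>l\<in>{k,k+1}. (z l + z (l+1))^2)"
      unfolding R_def by (rule sum.union_disjoint, auto simp: W_def)
    also have "(\<Sum>l\<in>{k,k+1}. (z l + z (l+1))^2) = (z k + z (k+1))^2 + (z (k+1) + z (k+2))^2" by simp
    finally show ?thesis by simp
  qed
  have pos: "2 * (z 0)^2 + 2 * (z d)^2 + R > 0"
  proof (rule ccontr)
    assume "\<not> ?thesis"
    hence "2 * (z 0)^2 + 2 * (z d)^2 + R = 0" using Rnn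
      by (smt (verit) zero_le_power2)
    hence "(z 0)^2 = 0" "(z d)^2 = 0" and R0: "R = 0" using Rnn
      by (smt (verit) zero_le_power2)+
    hence z0: "z 0 = 0" and zd: "z d = 0" by simp_all
    have Wz: "\<And>l. l \<in> W \<Longrightarrow> z l + z (l+1) = 0"
    proof -
      fix l assume l: "l \<in> W"
      have "\<forall>l\<in>W. (z l + z (l+1))^2 = 0" using R0 unfolding R_def
        by (subst sum_nonneg_eq_0_iff[symmetric], auto simp: W_def)
      thus "z l + z (l+1) = 0" using l by auto
    qed
    have fw: "\<And>l. l \<le> k \<Longrightarrow> z l = 0"
    proof -
      fix l show "l \<le> k \<Longrightarrow> z l = 0"
      proof (induction l)
        case 0 thus ?case using z0 by simp
      next
        case (Suc l)
        hence "l \<in> W" unfolding W_def using k by auto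
        thus ?case using Wz[of l] Suc by simp
      qed
    qed
    have bw0: "\<And>j. j \<le> d - (k+2) \<Longrightarrow> z (d - j) = 0"
    proof -
      fix j show "j \<le> d - (k+2) \<Longrightarrow> z (d - j) = 0"
      proof (induction j)
        case 0 thus ?case using zd by simp
      next
        case (Suc j)
        define m where "m = d - Suc j"
        have m: "k + 2 \<le> m" "m < d" "m + 1 = d - j" using Suc(2) k unfolding m_def by auto
        hence "m \<in> W" unfolding W_def by auto
        hence "z m + z (m+1) = 0" by (rule Wz)
        moreover have "z (m+1) = 0" using Suc m by simp
        ultimately show ?case unfolding m_def by simp
      qed
    qed
    have bw: "\<And>l. k + 2 \<le> l \<Longrightarrow> l \<le> d \<Longrightarrow> z l = 0"
    proof -
      fix l assume l: "k + 2 \<le> l" "l \<le> d"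
      have "z (d - (d - l)) = 0" by (rule bw0, insert l, auto)
      thus "z l = 0" using l by simp
    qed
    from nz obtain l where l: "l \<le> d" "z l \<noteq> 0" by auto
    have "z l = 0"
    proof (cases "l \<le> k")
      case True thus ?thesis by (rule fw)
    next
      case False
      show ?thesis
      proof (cases "l = k + 1")
        case True thus ?thesis using z1 by simp
      next
        case False
        thus ?thesis using \<open>\<not> l \<le> k\<close> l(1) bw by simp
      qed
    qed
    thus False using l by simp
  qed
  show ?thesis using sq_identity[of z d] split pos z1 by (simp add: power2_eq_square)
qed

lemma lap_carrier: "laplacian n E \<in> carrier_mat n n"
  unfolding laplacian_def by auto

lemma lap_sym: assumes sg: "simple_graph n E" shows "(laplacian n E)\<^sup>T = laplacian n E"
proof -
  have Esym: "\<And>a b. E a b \<Longrightarrow> E b a" using sg unfolding simple_graph_def by blast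
  show ?thesis unfolding laplacian_def by (rule eq_matI, auto intro: Esym)
qed

lemma lap_quad:
  assumes sg: "simple_graph n E"
  shows "(\<Sum>i=0..<n. \<Sum>j=0..<n. x i * laplacian n E $$ (i,j) * x j)
     = (\<Sum>i=0..<n. \<Sum>j=0..<n. if E i j then x i * x i - x i * x j else (0::real))"
proof (rule sum.cong[OF refl])
  fix i assume "i \<in> {0..<n}"
  hence i: "i < n" by simp
  have Eirr: "\<And>a. \<not> E a a" using sg unfolding simple_graph_def by blast
  have deg: "real (degree n E i) = (\<Sum>j=0..<n. if E i j then 1 else 0)"
  proof -
    have "{w. w < n \<and> E i w} = {w \<in> {0..<n}. E i w}" by auto
    hence "real (degree n E i) = (\<Sum>j\<in>{w \<in> {0..<n}. E i w}. 1)" unfolding degree_def by simp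
    also have "\<dots> = (\<Sum>j=0..<n. if E i j then 1 else 0)" by (rule sum.inter_filter, simp)
    finally show ?thesis .
  qed
  have "(\<Sum>j=0..<n. x i * laplacian n E $$ (i,j) * x j)
      = (\<Sum>j=0..<n. (if i = j then 1 else 0) * (x i * x i * real (degree n E i)) + (if E i j then - (x i * x j) else 0))"
  proof (rule sum.cong[OF refl])
    fix j assume "j \<in> {0..<n}"
    hence j: "j < n" by simp
    show "x i * laplacian n E $$ (i,j) * x j = (if i = j then 1 else 0) * (x i * x i * real (degree n E i)) + (if E i j then - (x i * x j) else 0)"
      unfolding laplacian_def using i j Eirr by auto
  qed
  also have "\<dots> = x i * x i * real (degree n E i) + (\<Sum>j=0..<n. if E i j then - (x i * x j) else 0)"
    by (simp add: sum.distrib sum_delta_l[OF i])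
  also have "\<dots> = (\<Sum>j=0..<n. if E i j then x i * x i - x i * x j else 0)"
    unfolding deg sum_distrib_left sum.distrib[symmetric]
    by (rule sum.cong, auto)
  finally show "(\<Sum>j=0..<n. x i * laplacian n E $$ (i,j) * x j) = (\<Sum>j=0..<n. if E i j then x i * x i - x i * x j else 0)" .
qed

lemma quad_bound:
  fixes x :: "nat \<Rightarrow> real"
  assumes sg: "simple_graph n E"
    and vn: "\<forall>l\<le>d. v l < n" and inj: "inj_on v {0..d}"
    and edges: "\<forall>l m. l \<le> d \<longrightarrow> m \<le> d \<longrightarrow> (E (v l) (v m) \<longleftrightarrow> (m = l + 1 \<or> l = m + 1))"
    and k: "k + 2 \<le> d" and w0: "w0 < n" "w0 \<notin> v ` {0..d}"
    and win: "\<forall>l\<le>d. E w0 (v l) \<longrightarrow> l = k \<or> l = k + 1 \<or> l = k + 2"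
    and T: "T = v ` ({0..d} - {k+1})"
    and x0: "\<forall>i. i \<notin> T \<longrightarrow> x i = 0" and nz: "\<exists>i\<in>T. x i \<noteq> 0"
  shows "(\<Sum>i=0..<n. \<Sum>j=0..<n. if E i j then x i * x i - x i * x j else 0)
      < (real n - real d + 2) * (\<Sum>i=0..<n. x i * x i)"
proof -
  have Esym: "\<And>a b. E a b \<Longrightarrow> E b a" using sg unfolding simple_graph_def by blast
  define P where "P = v ` {0..d}"
  define S where "S = {0..<n} - P"
  have PS: "P \<subseteq> {0..<n}" unfolding P_def using vn by auto
  have cP: "card P = d + 1" unfolding P_def using card_image[OF inj] by simp
  have "card P \<le> n" using card_mono[OF _ PS] by simp
  hence dn: "d + 1 \<le> n" using cP by simp
  have cS: "card S = n - (d + 1)" unfolding S_def using card_Diff_subset[OF _ PS] cP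
    by (simp add: finite_subset[OF PS])
  have w0S: "w0 \<in> S" unfolding S_def P_def using w0 by auto
  have fS: "finite S" unfolding S_def by auto
  have fP: "finite P" unfolding P_def by auto
  have cS1: "card S \<ge> 1" using w0S fS by (metis One_nat_def Suc_leI card_gt_0_iff empty_iff)
  have TP: "T \<subseteq> P" unfolding T P_def by auto
  have xP: "\<And>i. i \<notin> P \<Longrightarrow> x i = 0" using x0 TP by auto
  define z where "z = (\<lambda>l. x (v l))"
  have zk1: "z (k+1) = 0"
  proof -
    have "v (k+1) \<notin> T"
    proof
      assume "v (k+1) \<in> T"
      then obtain l where l: "l \<in> {0..d} - {k+1}" "v (k+1) = v l" unfolding T by blast
      have "k + 1 \<in> {0..d}" using k by auto
      hence "k + 1 = l" using inj_onD[OF inj l(2)] l(1) by auto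
      thus False using l(1) by auto
    qed
    thus ?thesis unfolding z_def using x0 by auto
  qed
  have nzz: "\<exists>l\<le>d. z l \<noteq> 0"
  proof -
    from nz obtain i where "i \<in> T" "x i \<noteq> 0" by auto
    then obtain l where "l \<in> {0..d}" "i = v l" unfolding T by blast
    thus ?thesis unfolding z_def using \<open>x i \<noteq> 0\<close> by auto
  qed
  have reidx: "\<And>g. (\<Sum>i\<in>P. g i) = (\<Sum>l=0..d. g (v l))"
    unfolding P_def by (subst sum.reindex[OF inj], simp)
  have Zeq: "(\<Sum>i=0..<n. x i * x i) = (\<Sum>l=0..d. (z l)^2)"
  proof -
    have "(\<Sum>i=0..<n. x i * x i) = (\<Sum>i\<in>P. x i * x i)"
      by (rule sum.mono_neutral_right, insert PS xP, auto)
    also have "\<dots> = (\<Sum>l=0..d. (z l)^2)" unfolding reidx z_def by (simp add: power2_eq_square)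
    finally show ?thesis .
  qed
  define Z where "Z = (\<Sum>l=0..d. (z l)^2)"
  have Znn: "Z \<ge> 0" unfolding Z_def by (rule sum_nonneg, auto)
  define hh where "hh = (\<lambda>i j. if E i j then x i * x i - x i * x j else (0::real))"
  have F1: "(\<Sum>i=0..<n. \<Sum>j=0..<n. hh i j) = (\<Sum>i\<in>P. \<Sum>j=0..<n. hh i j)"
    by (rule sum.mono_neutral_right, insert PS xP, auto simp: hh_def)
  have nPS: "{0..<n} = P \<union> S" "P \<inter> S = {}" unfolding S_def using PS by auto
  have F2: "\<And>i. (\<Sum>j=0..<n. hh i j) = (\<Sum>j\<in>P. hh i j) + (\<Sum>j\<in>S. if E i j then x i * x i else 0)"
  proof -
    fix i
    have "(\<Sum>j=0..<n. hh i j) = (\<Sum>j\<in>P. hh i j) + (\<Sum>j\<in>S. hh i j)"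
      unfolding nPS(1) by (rule sum.union_disjoint, insert nPS fS fP, auto)
    also have "(\<Sum>j\<in>S. hh i j) = (\<Sum>j\<in>S. if E i j then x i * x i else 0)"
      by (rule sum.cong, auto simp: hh_def S_def xP)
    finally show "(\<Sum>j=0..<n. hh i j) = (\<Sum>j\<in>P. hh i j) + (\<Sum>j\<in>S. if E i j then x i * x i else 0)" .
  qed
  have path: "(\<Sum>i\<in>P. \<Sum>j\<in>P. hh i j) = (\<Sum>l=0..<d. (z l - z (l+1))^2)"
  proof -
    have "(\<Sum>i\<in>P. \<Sum>j\<in>P. hh i j) = (\<Sum>l=0..d. \<Sum>m=0..d. hh (v l) (v m))" unfolding reidx ..
    also have "\<dots> = (\<Sum>l=0..d. \<Sum>m=0..d. if m = l + 1 \<or> l = m + 1 then z l * z l - z l * z m else 0)"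
      by (rule sum.cong[OF refl], rule sum.cong[OF refl], insert edges, auto simp: hh_def z_def)
    also have "\<dots> = (\<Sum>l=0..<d. (z l - z (l+1))^2)" by (rule path_identity)
    finally show ?thesis .
  qed
  define g where "g = (\<lambda>j. \<Sum>l=0..d. if E (v l) j then z l * z l else 0)"
  have outer: "(\<Sum>i\<in>P. \<Sum>j\<in>S. if E i j then x i * x i else 0) = (\<Sum>j\<in>S. g j)"
    unfolding reidx g_def z_def by (rule sum.swap)
  have gZ: "\<And>j. g j \<le> Z" unfolding g_def Z_def by (rule sum_mono, auto simp: power2_eq_square)
  have gw0: "g w0 \<le> (z k)^2 + (z (k+2))^2"
  proof -
    have "g w0 \<le> (\<Sum>l=0..d. if l \<in> {k, k+1, k+2} then z l * z l else 0)"
      unfolding g_def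
    proof (rule sum_mono)
      fix l assume l: "l \<in> {0..d}"
      show "(if E (v l) w0 then z l * z l else 0) \<le> (if l \<in> {k, k+1, k+2} then z l * z l else 0)"
        using win l Esym[of "v l" w0] by auto
    qed
    also have "\<dots> = (\<Sum>l\<in>{k, k+1, k+2}. z l * z l)"
      by (subst sum.inter_filter[symmetric], simp, rule sum.cong, insert k, auto)
    also have "\<dots> = (z k)^2 + (z (k+2))^2" using zk1 by (simp add: power2_eq_square)
    finally show ?thesis .
  qed
  have Sbound: "(\<Sum>j\<in>S. g j) \<le> (z k)^2 + (z (k+2))^2 + real (card S - 1) * Z"
  proof -
    have "(\<Sum>j\<in>S. g j) = g w0 + (\<Sum>j\<in>S - {w0}. g j)" using sum.remove[OF fS w0S] .
    also have "(\<Sum>j\<in>S - {w0}. g j) \<le> real (card (S - {w0})) * Z"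
      using sum_bounded_above[of "S - {w0}" g Z] gZ by auto
    also have "card (S - {w0}) = card S - 1" using w0S fS by simp
    finally show ?thesis using gw0 by simp
  qed
  have pb: "(\<Sum>l=0..<d. (z l - z (l+1))^2) + (z k)^2 + (z (k+2))^2 < 4 * Z"
    unfolding Z_def by (rule path_bound[OF k zk1 nzz])
  have F: "(\<Sum>i=0..<n. \<Sum>j=0..<n. hh i j) = (\<Sum>l=0..<d. (z l - z (l+1))^2) + (\<Sum>j\<in>S. g j)"
  proof -
    have "(\<Sum>i=0..<n. \<Sum>j=0..<n. hh i j) = (\<Sum>i\<in>P. \<Sum>j=0..<n. hh i j)" by (rule F1)
    also have "\<dots> = (\<Sum>i\<in>P. \<Sum>j\<in>P. hh i j) + (\<Sum>i\<in>P. \<Sum>j\<in>S. if E i j then x i * x i else 0)"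
      unfolding F2 sum.distrib ..
    also have "\<dots> = (\<Sum>l=0..<d. (z l - z (l+1))^2) + (\<Sum>j\<in>S. g j)" unfolding path outer ..
    finally show ?thesis .
  qed
  have hc: "real (card S - 1) = real n - real d - 2" using cS cS1 dn by auto
  have eqc: "(real n - real d + 2) * Z = 4 * Z + real (card S - 1) * Z" unfolding hc by (simp add: algebra_simps)
  have "(\<Sum>i=0..<n. \<Sum>j=0..<n. hh i j) < (real n - real d + 2) * Z"
    unfolding eqc F using Sbound pb by linarith
  thus ?thesis unfolding hh_def Zeq Z_def .
qed

theorem theorem3p1:
  fixes n d :: nat and E :: "nat \<Rightarrow> nat \<Rightarrow> bool"
  assumes "simple_graph n E" and "0 < n"
    and "graph_connected n E"
    and "diameter n E = d" and "d \<ge> 2"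
    and "\<not> iso_to_path n E (d + 1)"
  shows "lap_eig_count n E {real n - real d + 2 .. real n} \<le> n - d"
proof -
  obtain v k w0 where st: "\<forall>l\<le>d. v l < n" "inj_on v {0..d}"
     "\<forall>l m. l \<le> d \<longrightarrow> m \<le> d \<longrightarrow> (E (v l) (v m) \<longleftrightarrow> (m = l + 1 \<or> l = m + 1))"
     "k + 2 \<le> d" "w0 < n" "w0 \<notin> v ` {0..d}"
     "\<forall>l\<le>d. E w0 (v l) \<longrightarrow> l = k \<or> l = k + 1 \<or> l = k + 2"
    using graph_setup[OF assms] by blast
  define T where "T = v ` ({0..d} - {k+1})"
  have cT: "card T = d"
  proof -
    have "inj_on v ({0..d} - {k+1})" using st(2) by (rule inj_on_subset, auto)
    hence "card T = card ({0..d} - {k+1})" unfolding T_def by (rule card_image)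
    also have "\<dots> = d" using st(4) by simp
    finally show ?thesis .
  qed
  have TS: "T \<subseteq> {0..<n}" unfolding T_def using st(1) by auto
  have "(\<Sum>z\<in>{z. poly (char_poly (laplacian n E)) z = 0 \<and> z \<in> {real n - real d + 2 .. real n}}.
      Polynomial.order z (char_poly (laplacian n E))) \<le> n - card T"
  proof (rule count_principle[OF lap_carrier lap_sym[OF assms(1)] TS])
    fix x :: "nat \<Rightarrow> real"
    assume x0: "\<forall>i. i \<notin> T \<longrightarrow> x i = 0" and nz: "\<exists>i\<in>T. x i \<noteq> 0"
    show "(\<Sum>i=0..<n. \<Sum>j=0..<n. x i * laplacian n E $$ (i,j) * x j) < (real n - real d + 2) * (\<Sum>i=0..<n. x i * x i)"
      unfolding lap_quad[OF assms(1)]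
      by (rule quad_bound[OF assms(1) st T_def x0 nz])
  qed auto
  thus ?thesis unfolding lap_eig_count_def cT .
qed


end
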